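(* There exist absolute constants $c_1,c_2>0$ such that the following holds for all sufficiently large $n$. Let $t,s$ be integers with $2\le t<s<n/2$, and let $G$ be a graph on $n$ vertices such that every induced subgraph of $G$ on $s$ vertices contains an independent set of size $t$. Let $k=\lfloor \frac{s}{t-1}\rfloor$. Then: (i) if $k\le 2\log n$, then $G$ contains an independent set of size at least $c_1\, k\, n^{1/k}$; (ii) if $k>2\log n$, then $G$ contains an independent set of size at least $c_2\,\frac{\log n}{\log (k/\log n)}$.
   Context: All logarithms are natural. An independent set is a set of pairwise non-adjacent vertices. The $\Omega(\cdot)$ bounds of the paper are expressed here via absolute constants. *)

theory Defs
  imports Complex_Main
begin

text \<open>A simple graph on vertex set V is given by a symmetric, irreflexive edge relation E
  (only its restriction to V matters).\<close>

definition simple_graph :: "'a set \<Rightarrow> ('a \<Rightarrow> 'a \<Rightarrow> bool) \<Rightarrow> bool" where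
  "simple_graph V E \<longleftrightarrow> finite V \<and> (\<forall>x\<in>V. \<forall>y\<in>V. E x y \<longleftrightarrow> E y x) \<and> (\<forall>x\<in>V. \<not> E x x)"

definition indep_set :: "('a \<Rightarrow> 'a \<Rightarrow> bool) \<Rightarrow> 'a set \<Rightarrow> bool" where
  "indep_set E I \<longleftrightarrow> (\<forall>x\<in>I. \<forall>y\<in>I. \<not> E x y)"

end

theory Submission
  imports Defs
begin


definition clq :: "('a \<Rightarrow> 'a \<Rightarrow> bool) \<Rightarrow> 'a set \<Rightarrow> bool" where
  "clq E C \<longleftrightarrow> (\<forall>x\<in>C. \<forall>y\<in>C. x \<noteq> y \<longrightarrow> E x y)"

lemma ramsey_aux:
  assumes sg: "simple_graph V E"
  shows "\<And>a W. W \<subseteq> V \<Longrightarrow> (q + a) choose q \<le> card W \<Longrightarrow>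
     (\<exists>C\<subseteq>W. card C = Suc q \<and> clq E C) \<or> (\<exists>I\<subseteq>W. card I = Suc a \<and> indep_set E I)"
proof (induction q)
  case 0
  then obtain v where v: "v \<in> W" by fastforce
  then show ?case by (intro disjI1 exI[of _ "{v}"]) (auto simp: clq_def)
next
  case (Suc q)
  note IHq = Suc.IH
  from Suc.prems show ?case
  proof (induction a arbitrary: W)
    case 0
    then obtain v where v: "v \<in> W" by fastforce
    with 0 sg show ?case by (intro disjI2 exI[of _ "{v}"]) (auto simp: indep_set_def simple_graph_def)
  next
    case (Suc a)
    note IHa = Suc.IH
    have fin: "finite W" using Suc.prems(1) sg by (auto simp: simple_graph_def intro: finite_subset)
    have "0 < (Suc q + Suc a) choose (Suc q)" by simp
    then have pos: "0 < card W" using Suc.prems(2) by linarith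
    then obtain v where v: "v \<in> W" by fastforce
    define Nb where "Nb = {x\<in>W - {v}. E v x}"
    define M where "M = {x\<in>W - {v}. \<not> E v x}"
    have un: "W - {v} = Nb \<union> M" and dj: "Nb \<inter> M = {}" by (auto simp: Nb_def M_def)
    have cW: "card W = Suc (card Nb + card M)"
    proof -
      have "card (W - {v}) = card Nb + card M"
      proof -
        have "finite Nb" "finite M" using fin by (auto simp: Nb_def M_def)
        then show ?thesis using un dj by (simp add: card_Un_disjoint)
      qed
      then show ?thesis using fin v by (metis card_Suc_Diff1)
    qed
    have binom: "(Suc q + Suc a) choose (Suc q) = ((q + Suc a) choose q) + ((Suc q + a) choose (Suc q))"
      by simp
    have "(q + Suc a) choose q \<le> card Nb \<or> (Suc q + a) choose (Suc q) \<le> card M"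
      using Suc.prems(2) cW binom by linarith
    then show ?case
    proof
      assume "(q + Suc a) choose q \<le> card Nb"
      from IHq[of Nb "Suc a"] this have
        "(\<exists>C\<subseteq>Nb. card C = Suc q \<and> clq E C) \<or> (\<exists>I\<subseteq>Nb. card I = Suc (Suc a) \<and> indep_set E I)"
        using Suc.prems(1) by (auto simp: Nb_def)
      then show ?thesis
      proof
        assume "\<exists>C\<subseteq>Nb. card C = Suc q \<and> clq E C"
        then obtain C where C: "C \<subseteq> Nb" "card C = Suc q" "clq E C" by blast
        have fC: "finite C" using C(2) card.infinite by fastforce
        have vC: "v \<notin> C" using C(1) by (auto simp: Nb_def)
        have "clq E (insert v C)"
          using C sg Suc.prems(1) v unfolding clq_def simple_graph_def Nb_def by blast
        moreover have "card (insert v C) = Suc (Suc q)" using fC vC C(2) by simp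
        moreover have "insert v C \<subseteq> W" using C(1) v by (auto simp: Nb_def)
        ultimately show ?thesis by blast
      next
        assume "\<exists>I\<subseteq>Nb. card I = Suc (Suc a) \<and> indep_set E I"
        then show ?thesis by (auto simp: Nb_def)
      qed
    next
      assume "(Suc q + a) choose (Suc q) \<le> card M"
      from IHa[of M] this have
        "(\<exists>C\<subseteq>M. card C = Suc (Suc q) \<and> clq E C) \<or> (\<exists>I\<subseteq>M. card I = Suc a \<and> indep_set E I)"
        using Suc.prems(1) by (auto simp: M_def)
      then show ?thesis
      proof
        assume "\<exists>I\<subseteq>M. card I = Suc a \<and> indep_set E I"
        then obtain I where I: "I \<subseteq> M" "card I = Suc a" "indep_set E I" by blast
        have fI: "finite I" using I(2) card.infinite by fastforce
        have vI: "v \<notin> I" using I(1) by (auto simp: M_def)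
        have "indep_set E (insert v I)"
          using I sg Suc.prems(1) v unfolding indep_set_def simple_graph_def M_def by blast
        moreover have "card (insert v I) = Suc (Suc a)" using fI vI I(2) by simp
        moreover have "insert v I \<subseteq> W" using I(1) v by (auto simp: M_def)
        ultimately show ?thesis by blast
      next
        assume "\<exists>C\<subseteq>M. card C = Suc (Suc q) \<and> clq E C"
        then show ?thesis by (auto simp: M_def)
      qed
    qed
  qed
qed

lemma reduce:
  assumes sg: "simple_graph V E"
    and H: "\<forall>S \<subseteq> V. card S = s \<longrightarrow> (\<exists>I \<subseteq> S. card I = t \<and> indep_set E I)"
    and tq: "s < (t - 1) * q"
  shows "\<exists>X\<subseteq>V. card X < s \<and> (\<forall>C \<subseteq> V - X. card C = q \<longrightarrow> \<not> clq E C)"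
proof -
  have finV: "finite V" using sg by (simp add: simple_graph_def)
  define good where "good m \<longleftrightarrow> (\<exists>X\<subseteq>V. card X = m * q \<and> (\<forall>I\<subseteq>X. indep_set E I \<longrightarrow> card I \<le> m))" for m
  define Ms where "Ms = {m. m \<le> t - 1 \<and> good m}"
  have "good 0" unfolding good_def by (intro exI[of _ "{}"]) auto
  then have "0 \<in> Ms" by (simp add: Ms_def)
  moreover have "finite Ms" unfolding Ms_def by simp
  ultimately have m0in: "Max Ms \<in> Ms" and m0max: "\<And>m. m \<in> Ms \<Longrightarrow> m \<le> Max Ms"
    using Max_in Max_ge by blast+
  define m0 where "m0 = Max Ms"
  from m0in obtain X where X: "X \<subseteq> V" "card X = m0 * q" "\<And>I. I \<subseteq> X \<Longrightarrow> indep_set E I \<Longrightarrow> card I \<le> m0"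
    and m0t: "m0 \<le> t - 1"
    unfolding Ms_def good_def m0_def by blast
  have finX: "finite X" using X(1) finV finite_subset by blast
  have small: "card X < s"
  proof (rule ccontr)
    assume "\<not> card X < s"
    then obtain S where S: "S \<subseteq> X" "card S = s" by (meson not_less obtain_subset_with_card_n)
    then obtain I where I: "I \<subseteq> S" "card I = t" "indep_set E I" using H X(1) by blast
    have "card I \<le> m0" using X(3)[of I] I S by blast
    moreover have "t \<ge> 1" using tq by (cases t) auto
    ultimately show False using I(2) m0t by linarith
  qed
  have "\<forall>C \<subseteq> V - X. card C = q \<longrightarrow> \<not> clq E C"
  proof (intro allI impI notI)
    fix C assume C: "C \<subseteq> V - X" "card C = q" "clq E C"
    have finC: "finite C" using C(1) finV finite_subset by blast
    have cXC: "card (X \<union> C) = Suc m0 * q" 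
    proof -
      have "X \<inter> C = {}" using C(1) by blast
      then show ?thesis using C(2) X(2) finX finC by (simp add: card_Un_disjoint)
    qed
    have indb: "card I \<le> Suc m0" if "I \<subseteq> X \<union> C" "indep_set E I" for I
    proof -
      have fI: "finite I" using that finX finC finite_subset by blast
      have "card (I \<inter> C) \<le> Suc 0"
        using fI that C(3) by (subst card_le_Suc0_iff_eq) (auto simp: indep_set_def clq_def; blast)+
      moreover have "card (I \<inter> X) \<le> m0" using X(3)[of "I \<inter> X"] that by (auto simp: indep_set_def)
      moreover have "card I \<le> card (I \<inter> X) + card (I \<inter> C)"
      proof -
        have "I = (I \<inter> X) \<union> (I \<inter> C)" using that by blast
        then have "card I = card ((I \<inter> X) \<union> (I \<inter> C))" by simp
        also have "\<dots> \<le> card (I \<inter> X) + card (I \<inter> C)" by (rule card_Un_le)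
        finally show ?thesis .
      qed
      ultimately show ?thesis by linarith
    qed
    have "Suc m0 \<le> t - 1"
    proof (rule ccontr)
      assume "\<not> Suc m0 \<le> t - 1"
      then have "m0 = t - 1" using m0t by linarith
      then have "s \<le> card X" using X(2) tq by simp
      then show False using small by linarith
    qed
    then have "Suc m0 \<in> Ms" unfolding Ms_def good_def
      using cXC indb C(1) X(1) by (intro CollectI conjI exI[of _ "X \<union> C"]) auto
    then show False using m0max m0_def by fastforce
  qed
  then show ?thesis using small X(1) by blast
qed



lemma fact_pow_bound: "real i ^ i \<le> exp (real i) * fact i"
proof (induction i)
  case 0 then show ?case by simp
next
  case (Suc i)
  have key: "real (Suc i) ^ i \<le> exp 1 * real i ^ i"
  proof (cases "i = 0")
    case True then show ?thesis using exp_ge_add_one_self[of 1] by simp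
  next
    case False
    then have ip: "real i > 0" by simp
    have "real (Suc i) = real i * (1 + 1 / real i)" using ip by (simp add: field_simps)
    then have "real (Suc i) ^ i = (real i * (1 + 1 / real i)) ^ i" by simp
    also have "\<dots> = real i ^ i * (1 + 1 / real i) ^ i" by (simp add: power_mult_distrib)
    finally have eq: "real (Suc i) ^ i = real i ^ i * (1 + 1 / real i) ^ i" .
    have "(1 + 1 / real i) ^ i \<le> exp (1 / real i) ^ i"
      by (rule power_mono) (use exp_ge_add_one_self[of "1 / real i"] ip in auto)
    also have "exp (1 / real i) ^ i = exp 1"
      using ip by (simp add: exp_of_nat_mult[symmetric])
    finally have "(1 + 1 / real i) ^ i \<le> exp 1" .
    then have "real i ^ i * (1 + 1 / real i) ^ i \<le> real i ^ i * exp 1"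
      by (intro mult_left_mono) auto
    then show ?thesis unfolding eq by (simp add: mult.commute)
  qed
  have "real (Suc i) ^ Suc i = real (Suc i) * real (Suc i) ^ i" by simp
  also have "\<dots> \<le> real (Suc i) * (exp 1 * real i ^ i)"
    using key by (intro mult_left_mono) auto
  also have "\<dots> \<le> real (Suc i) * (exp 1 * (exp (real i) * fact i))"
    using Suc.IH by (intro mult_left_mono) auto
  also have "\<dots> = exp (real (Suc i)) * fact (Suc i)"
    by (simp add: exp_add[symmetric] algebra_simps)
  finally show ?case .
qed

lemma binom_bound:
  assumes "i \<ge> 1"
  shows "real (m choose i) \<le> (exp 1 * real m / real i) ^ i"
proof -
  have ip: "real i > 0" using assms by simp
  have "real (m choose i) * fact i \<le> real m ^ i"
    using binomial_fact_pow[of m i] by (metis of_nat_fact of_nat_le_iff of_nat_mult of_nat_power)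
  then have "real (m choose i) \<le> real m ^ i / fact i" by (simp add: field_simps)
  also have "\<dots> \<le> real m ^ i * exp (real i) / real i ^ i"
  proof -
    have "real m ^ i / fact i = real m ^ i * exp (real i) / (exp (real i) * fact i)" by simp
    also have "\<dots> \<le> real m ^ i * exp (real i) / real i ^ i"
      using fact_pow_bound[of i] ip by (intro divide_left_mono) auto
    finally show ?thesis .
  qed
  also have "\<dots> = (exp 1 * real m / real i) ^ i"
    by (simp add: power_divide power_mult_distrib exp_of_nat_mult[symmetric] mult.commute)
  finally show ?thesis .
qed

lemma ln2_half: "ln (2::real) \<ge> 1/2"
proof -
  have "exp (1/2::real) ^ 2 = exp 1" by (simp add: exp_of_nat_mult[symmetric])
  also have "\<dots> \<le> 2 ^ 2" using exp_le by simp
  finally have "exp (1/2::real) \<le> 2" by (rule power2_le_imp_le) auto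
  then show ?thesis by (subst ln_ge_iff) auto
qed

lemma ln2_lt1: "ln (2::real) < 1"
  using ln_le_minus_one[of 2] ln2_half by (metis exp_gt_zero less_eq_real_def ln_less_self not_less ln_2_less_1)

lemma exp3: "exp (3::real) \<le> 27"
proof -
  have "exp (3::real) = exp 1 ^ 3" by (simp add: exp_of_nat_mult[symmetric])
  also have "\<dots> \<le> 3 ^ 3" using exp_le by (intro power_mono) auto
  finally show ?thesis by simp
qed

lemma ln_pow2: "ln (2 ^ m :: real) \<le> real m"
  using ln2_lt1 mult_left_mono[of "ln 2" 1 "real m"] by (simp add: ln_realpow)



lemma num_A:
  fixes n :: real and k j :: nat
  assumes k1: "k \<ge> 1" and np: "n > 0" and u3: "ln n / k \<ge> 3"
    and jb: "real j \<le> k * exp (ln n / k - 3)"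
  shows "real ((k+j) choose k) \<le> n / 2"
proof -
  define u where "u = ln n / k"
  have kp: "real k > 0" using k1 by simp
  have b: "real ((k+j) choose k) \<le> (exp 1 * real (k+j) / k) ^ k" by (rule binom_bound[OF k1])
  have e1: "exp (u - 3) \<ge> 1" using u3 u_def by simp
  have "real (k+j) / k = 1 + j / k" using kp by (simp add: field_simps)
  also have "\<dots> \<le> 1 + exp (u - 3)"
  proof -
    have "real j / k \<le> exp (u - 3)" using jb kp unfolding u_def by (simp add: divide_le_eq mult.commute)
    then show ?thesis by simp
  qed
  also have "\<dots> \<le> 2 * exp (u - 3)" using e1 by simp
  finally have "exp 1 * (real (k+j) / k) \<le> exp 1 * (2 * exp (u - 3))"
    by (intro mult_left_mono) auto
  then have "exp 1 * real (k+j) / k \<le> exp 1 * (2 * exp (u - 3))" by simp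
  also have "\<dots> = exp (u - 2 + ln 2)"
  proof -
    have "u - 2 + ln 2 = 1 + (ln 2 + (u - 3))" by simp
    then show ?thesis by (simp only: exp_add) simp
  qed
  finally have base: "exp 1 * real (k+j) / k \<le> exp (u - 2 + ln 2)" .
  have "(exp 1 * real (k+j) / k) ^ k \<le> exp (u - 2 + ln 2) ^ k"
    by (rule power_mono[OF base]) (use kp in simp)
  also have "\<dots> = exp (real k * (u - 2 + ln 2))" by (simp add: exp_of_nat_mult)
  also have "real k * (u - 2 + ln 2) = ln n - real k * (2 - ln 2)"
    using kp u_def by (simp add: field_simps)
  also have "exp (ln n - real k * (2 - ln 2)) \<le> exp (ln n - ln 2)"
  proof -
    have "real k * (2 - ln 2) \<ge> 2 - ln 2" using k1 ln2_lt1 mult_right_mono[of 1 "real k" "2 - ln 2"] by auto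
    then have "ln n - real k * (2 - ln 2) \<le> ln n - ln 2" using ln2_lt1 by linarith
    then show ?thesis by simp
  qed
  also have "\<dots> = n / 2" using np by (simp add: exp_diff)
  finally show ?thesis using b by linarith
qed

lemma num_B:
  fixes n :: real and k j :: nat
  assumes j1: "j \<ge> 1" and np: "n > 0"
    and h: "real j * ln (exp 1 * real (k+j) / j) \<le> ln n - ln 2"
  shows "real ((k+j) choose k) \<le> n / 2"
proof -
  have jp: "real j > 0" using j1 by simp
  have sym: "(k+j) choose k = (k+j) choose j" using binomial_symmetric[of j "k+j"] by simp
  have b: "real ((k+j) choose j) \<le> (exp 1 * real (k+j) / j) ^ j" by (rule binom_bound[OF j1])
  have pos: "exp 1 * real (k+j) / j > 0" using jp by simp
  have "(exp 1 * real (k+j) / j) ^ j = exp (real j * ln (exp 1 * real (k+j) / j))"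
    using pos by (simp add: exp_of_nat_mult)
  also have "\<dots> \<le> exp (ln n - ln 2)" using h by simp
  also have "\<dots> = n / 2" using np by (simp add: exp_diff)
  finally show ?thesis using b sym by simp
qed

lemma floor_facts:
  fixes y :: real assumes "y \<ge> 1"
  shows "real (nat \<lfloor>y\<rfloor>) \<le> y" "real (nat \<lfloor>y\<rfloor>) \<ge> 1" "2 * real (nat \<lfloor>y\<rfloor>) \<ge> y"
    "nat \<lfloor>y\<rfloor> \<ge> 1"
proof -
  have f1: "\<lfloor>y\<rfloor> \<ge> 1" using assms by simp
  have f2: "real_of_int \<lfloor>y\<rfloor> \<le> y" "y < real_of_int \<lfloor>y\<rfloor> + 1" by linarith+
  have e: "real (nat \<lfloor>y\<rfloor>) = real_of_int \<lfloor>y\<rfloor>" using f1 by simp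
  show "real (nat \<lfloor>y\<rfloor>) \<le> y" "real (nat \<lfloor>y\<rfloor>) \<ge> 1" "2 * real (nat \<lfloor>y\<rfloor>) \<ge> y"
    using e f1 f2 by linarith+
  show "nat \<lfloor>y\<rfloor> \<ge> 1" using f1 by linarith
qed

lemma num_i:
  fixes n :: real and k :: nat
  assumes n20: "n \<ge> exp 20" and k1: "k \<ge> 1" and kL: "real k \<le> 2 * ln n"
  shows "\<exists>j. real ((k+j) choose k) \<le> n / 2 \<and> 1/2000 * real k * n powr (1 / real k) \<le> real j + 1"
proof -
  have np: "n > 0" using n20 by (meson exp_gt_zero less_le_trans)
  have L20: "ln n \<ge> 20" using n20 np by (subst ln_ge_iff) auto
  have kp: "real k > 0" using k1 by simp
  define u where "u = ln n / k"
  have pw: "n powr (1 / real k) = exp u" using np unfolding u_def powr_def by simp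
  show ?thesis
  proof (cases "u \<ge> 3")
    case True
    define x where "x = real k * exp (u - 3)"
    have x0: "x \<ge> 0" unfolding x_def by simp
    define j where "j = nat \<lfloor>x\<rfloor>"
    have j1: "real j \<le> x" "x \<le> real j + 1" unfolding j_def using x0 by linarith+
    have "real ((k+j) choose k) \<le> n / 2"
      by (rule num_A[OF k1 np]) (use True j1 in \<open>simp_all add: u_def x_def\<close>)
    moreover have "1/2000 * real k * n powr (1 / real k) \<le> real j + 1"
    proof -
      have "x = real k * exp u / exp 3" unfolding x_def by (simp add: exp_diff)
      moreover have "real k * exp u / 2000 \<le> real k * exp u / exp 3"
        using exp3 kp by (intro divide_left_mono) auto
      moreover have "1/2000 * real k * n powr (1 / real k) = real k * exp u / 2000" using pw by simp
      ultimately show ?thesis using j1 by linarith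
    qed
    ultimately show ?thesis by blast
  next
    case False
    define y where "y = ln n / 16"
    have y1: "y \<ge> 1" using L20 unfolding y_def by simp
    define j where "j = nat \<lfloor>y\<rfloor>"
    note jf = floor_facts[OF y1, folded j_def]
    have jp: "real j > 0" using jf by simp
    have "real (k + j) / j = real k / j + 1" using jp by (simp add: field_simps)
    also have "real k / j \<le> 64"
    proof -
      have "real k \<le> 64 * real j" using kL jf(3) unfolding y_def by linarith
      then show ?thesis using jp by (simp add: divide_le_eq)
    qed
    finally have r65: "real (k + j) / j \<le> 65" by simp
    have "ln (exp 1 * real (k+j) / j) = 1 + ln (real (k+j) / j)" using jp
      by (simp add: ln_mult ln_div)
    also have "ln (real (k+j) / j) \<le> ln (2^7)"
      using r65 jp by (subst ln_le_cancel_iff) auto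
    also have "ln (2^7::real) \<le> 7" using ln_pow2[of 7] by simp
    finally have l8: "ln (exp 1 * real (k+j) / j) \<le> 8" by simp
    have "real j * ln (exp 1 * real (k+j) / j) \<le> real j * 8"
      using l8 jp by (intro mult_left_mono) auto
    also have "\<dots> \<le> ln n - ln 2" using jf(1) ln2_lt1 L20 unfolding y_def by linarith
    finally have "real ((k+j) choose k) \<le> n / 2" using num_B[OF jf(4)[folded j_def] np] by blast
    moreover have "1/2000 * real k * n powr (1 / real k) \<le> real j + 1"
    proof -
      have "exp u \<le> 27" using False exp3 by (meson exp_le_cancel_iff le_less_linear less_imp_le order_trans)
      then have "real k * exp u \<le> (2 * ln n) * 27" using kL kp by (intro mult_mono) auto
      then show ?thesis using pw jf(3) L20 unfolding y_def by simp
    qed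
    ultimately show ?thesis by blast
  qed
qed

lemma num_ii:
  fixes n :: real and k :: nat
  assumes n20: "n \<ge> exp 20" and kL: "real k > 2 * ln n"
  shows "\<exists>j. real ((k+j) choose k) \<le> n / 2 \<and> 1/64 * ln n / ln (real k / ln n) \<le> real j + 1"
proof -
  have np: "n > 0" using n20 by (meson exp_gt_zero less_le_trans)
  have L20: "ln n \<ge> 20" using n20 np by (subst ln_ge_iff) auto
  have n2: "n \<ge> 2"
  proof -
    have "(2::real) \<le> 1 + 20" by simp
    also have "\<dots> \<le> exp 20" by (rule exp_ge_add_one_self)
    finally show ?thesis using n20 by linarith
  qed
  define L where "L = ln n"
  define r where "r = real k / L"
  have Lp: "L > 0" using L20 L_def by simp
  have r2: "r > 2" using kL Lp unfolding r_def L_def by (simp add: field_simps)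
  have kr: "real k = r * L" using Lp unfolding r_def by simp
  define lr where "lr = ln r"
  have lr2: "lr \<ge> 1/2"
  proof -
    have "ln 2 \<le> ln r" using r2 by simp
    then show ?thesis using ln2_half lr_def by linarith
  qed
  have lrr: "lr \<le> r" using ln_bound[of r] r2 lr_def by simp
  define y where "y = L / (64 * lr)"
  have tgt: "1/64 * ln n / ln (real k / ln n) = y" unfolding y_def lr_def r_def L_def by simp
  show ?thesis
  proof (cases "y < 1")
    case True
    then show ?thesis using tgt n2 by (intro exI[of _ 0]) simp
  next
    case False
    then have y1: "y \<ge> 1" by simp
    define j where "j = nat \<lfloor>y\<rfloor>"
    note jf = floor_facts[OF y1, folded j_def]
    have jp: "real j > 0" using jf by simp
    have jy: "y \<le> real j + 1" unfolding j_def using y1 by linarith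
    have lrp: "lr > 0" using lr2 by simp
    have "real k / j \<le> 128 * r * lr"
    proof -
      have "real k = (64 * lr * r) * y" using kr lrp unfolding y_def by (simp add: field_simps)
      also have "\<dots> \<le> (64 * lr * r) * (2 * real j)"
        using jf(3) r2 lrp by (intro mult_left_mono) auto
      finally have "real k \<le> (128 * r * lr) * real j" by (simp add: algebra_simps)
      then show ?thesis using jp by (simp add: divide_le_eq)
    qed
    note kj = this
    have "real (k + j) / j = real k / j + 1" using jp by (simp add: field_simps)
    also have "\<dots> \<le> 128 * r * lr + 1" using kj by simp
    also have "\<dots> \<le> 128 * r * r + r * r"
    proof -
      have "r * lr \<le> r * r" using lrr r2 by (intro mult_left_mono) auto
      moreover have "1 \<le> r * r" using mult_mono[of 1 r 1 r] r2 by simp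
      ultimately show ?thesis by linarith
    qed
    finally have q: "real (k + j) / j \<le> 129 * r ^ 2" by (simp add: power2_eq_square)
    have "ln (exp 1 * real (k+j) / j) = 1 + ln (real (k+j) / j)" using jp
      by (simp add: ln_mult ln_div)
    also have "ln (real (k+j) / j) \<le> ln (129 * r ^ 2)"
      using q jp r2 by (subst ln_le_cancel_iff) auto
    also have "ln (129 * r ^ 2) = ln 129 + 2 * lr" using r2 unfolding lr_def by (simp add: ln_mult ln_realpow)
    also have "ln (129::real) \<le> 8"
    proof -
      have a: "ln (129::real) \<le> ln 256" by (subst ln_le_cancel_iff) auto
      have b: "ln (256::real) \<le> 8" using ln_pow2[of 8] by simp
      from a b show ?thesis by linarith
    qed
    finally have l9: "ln (exp 1 * real (k+j) / j) \<le> 9 + 2 * lr" by simp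
    have "real j * ln (exp 1 * real (k+j) / j) \<le> real j * (9 + 2 * lr)"
      using l9 jp by (intro mult_left_mono) auto
    also have "\<dots> \<le> y * (9 + 2 * lr)" using jf(1) lrp by (intro mult_right_mono) auto
    also have "y * (9 + 2 * lr) \<le> ln n - ln 2"
    proof -
      have e: "y * (9 + 2 * lr) = 9 * L / (64 * lr) + L / 32" using lrp unfolding y_def by (simp add: field_simps)
      have "9 * L / (64 * lr) \<le> 9 * L / 32"
        using lr2 Lp by (intro divide_left_mono) auto
      then show ?thesis using e ln2_lt1 L20 unfolding L_def by linarith
    qed
    finally have "real ((k+j) choose k) \<le> n / 2" using num_B[OF jf(4)[folded j_def] np] by blast
    then show ?thesis using jy tgt by auto
  qed
qed


theorem theorem2p1:
  shows "\<exists>c1 c2 :: real. c1 > 0 \<and> c2 > 0 \<and> (\<exists>N :: nat. \<forall>n \<ge> N.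
    \<forall>(t :: nat) (s :: nat) (V :: nat set) (E :: nat \<Rightarrow> nat \<Rightarrow> bool).
      2 \<le> t \<and> t < s \<and> real s < real n / 2 \<and>
      simple_graph V E \<and> card V = n \<and>
      (\<forall>S \<subseteq> V. card S = s \<longrightarrow> (\<exists>I \<subseteq> S. card I = t \<and> indep_set E I)) \<longrightarrow>
      (let k = s div (t - 1) in
        (real k \<le> 2 * ln (real n) \<longrightarrow>
           (\<exists>I \<subseteq> V. indep_set E I \<and> real (card I) \<ge> c1 * real k * real n powr (1 / real k))) \<and>
        (real k > 2 * ln (real n) \<longrightarrow>
           (\<exists>I \<subseteq> V. indep_set E I \<and>
              real (card I) \<ge> c2 * ln (real n) / ln (real k / ln (real n))))))"
proof (rule exI[of _ "1/2000"], rule exI[of _ "1/64"], intro conjI)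
  show "(0::real) < 1/2000" "(0::real) < 1/64" by simp_all
  show "\<exists>N :: nat. \<forall>n \<ge> N.
    \<forall>(t :: nat) (s :: nat) (V :: nat set) (E :: nat \<Rightarrow> nat \<Rightarrow> bool).
      2 \<le> t \<and> t < s \<and> real s < real n / 2 \<and>
      simple_graph V E \<and> card V = n \<and>
      (\<forall>S \<subseteq> V. card S = s \<longrightarrow> (\<exists>I \<subseteq> S. card I = t \<and> indep_set E I)) \<longrightarrow>
      (let k = s div (t - 1) in
        (real k \<le> 2 * ln (real n) \<longrightarrow>
           (\<exists>I \<subseteq> V. indep_set E I \<and> real (card I) \<ge> 1/2000 * real k * real n powr (1 / real k))) \<and>
        (real k > 2 * ln (real n) \<longrightarrow>
           (\<exists>I \<subseteq> V. indep_set E I \<and>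
              real (card I) \<ge> 1/64 * ln (real n) / ln (real k / ln (real n)))))"
  proof (rule exI[of _ "nat \<lceil>exp (20::real)\<rceil>"], intro allI impI)
  fix n t s :: nat and V :: "nat set" and E :: "nat \<Rightarrow> nat \<Rightarrow> bool"
  assume nN: "nat \<lceil>exp (20::real)\<rceil> \<le> n"
  assume H: "2 \<le> t \<and> t < s \<and> real s < real n / 2 \<and> simple_graph V E \<and> card V = n \<and>
      (\<forall>S \<subseteq> V. card S = s \<longrightarrow> (\<exists>I \<subseteq> S. card I = t \<and> indep_set E I))"
  have t2: "2 \<le> t" using H by (elim conjE)
  have ts: "t < s" using H by (elim conjE)
  have sn: "real s < real n / 2" using H by (elim conjE)
  have sg: "simple_graph V E" using H by (elim conjE)
  have cV: "card V = n" using H by (elim conjE)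
  have Hs: "\<forall>S \<subseteq> V. card S = s \<longrightarrow> (\<exists>I \<subseteq> S. card I = t \<and> indep_set E I)" using H by (elim conjE)
  have n20: "real n \<ge> exp 20"
  proof -
    have "real (nat \<lceil>exp (20::real)\<rceil>) \<le> real n" using nN by (rule of_nat_mono)
    then show ?thesis using real_nat_ceiling_ge[of "exp 20"] by linarith
  qed
  define k where "k = s div (t - 1)"
  have t1: "t - 1 \<ge> 1" using t2 by simp
  have k1: "k \<ge> 1"
  proof -
    have "(t - 1) div (t - 1) \<le> s div (t - 1)" using ts by (intro div_le_mono) simp
    then show ?thesis unfolding k_def using t1 by simp
  qed
  have sq: "s < (t - 1) * (k + 1)"
  proof -
    obtain m where m: "m = t - 1" by blast
    have "s = m * k + s mod m" unfolding k_def m by simp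
    moreover have "s mod m < m" using t1 m by simp
    moreover have "m * (k + 1) = m * k + m" by simp
    ultimately have "s < m * (k + 1)" by linarith
    then show ?thesis using m by simp
  qed
  obtain X where X: "X \<subseteq> V" "card X < s" and noC: "\<forall>C \<subseteq> V - X. card C = k + 1 \<longrightarrow> \<not> clq E C"
    using reduce[OF sg Hs sq] by blast
  have finV: "finite V" using sg by (simp add: simple_graph_def)
  have cW: "card (V - X) = n - card X" using X(1) finV cV by (simp add: card_Diff_subset finite_subset)
  have cWr: "real (card (V - X)) \<ge> real n / 2"
  proof -
    have "card X \<le> n" using cV card_mono[OF finV X(1)] by simp
    then have "real (card (V - X)) = real n - real (card X)" using cW by simp
    then show ?thesis using X(2) sn by linarith
  qed
  have key: "\<exists>I \<subseteq> V. indep_set E I \<and> real (card I) = real j + 1"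
    if hj: "real ((k+j) choose k) \<le> real n / 2" for j
  proof -
    have "(k + j) choose k \<le> card (V - X)" using hj cWr by linarith
    from ramsey_aux[OF sg, of "V - X" k j] this
    have "(\<exists>C\<subseteq>V - X. card C = Suc k \<and> clq E C) \<or> (\<exists>I\<subseteq>V - X. card I = Suc j \<and> indep_set E I)"
      by blast
    then obtain I where "I \<subseteq> V - X" "card I = Suc j" "indep_set E I" using noC by auto
    then show ?thesis by (intro exI[of _ I]) auto
  qed
  show "let k = s div (t - 1) in
        (real k \<le> 2 * ln (real n) \<longrightarrow>
           (\<exists>I \<subseteq> V. indep_set E I \<and> real (card I) \<ge> 1/2000 * real k * real n powr (1 / real k))) \<and>
        (real k > 2 * ln (real n) \<longrightarrow>
           (\<exists>I \<subseteq> V. indep_set E I \<and>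
              real (card I) \<ge> 1/64 * ln (real n) / ln (real k / ln (real n))))"
    unfolding Let_def k_def[symmetric]
  proof (intro conjI impI)
    assume "real k \<le> 2 * ln (real n)"
    from num_i[OF n20 k1 this] obtain j where
      j: "real ((k+j) choose k) \<le> real n / 2" "1/2000 * real k * real n powr (1 / real k) \<le> real j + 1"
      by blast
    from key[OF j(1)] j(2) show "\<exists>I \<subseteq> V. indep_set E I \<and> real (card I) \<ge> 1/2000 * real k * real n powr (1 / real k)"
      by auto
  next
    assume "real k > 2 * ln (real n)"
    from num_ii[OF n20 this] obtain j where
      j: "real ((k+j) choose k) \<le> real n / 2" "1/64 * ln (real n) / ln (real k / ln (real n)) \<le> real j + 1"
      by blast
    from key[OF j(1)] j(2) show "\<exists>I \<subseteq> V. indep_set E I \<and> real (card I) \<ge> 1/64 * ln (real n) / ln (real k / ln (real n))"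
      by auto
  qed
  qed
qed



end
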